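(* Let $N\in\mathbb N^+$, $\phi(\xi)=\xi\sqrt{\xi^2+1}$. Then there is $C>0$ independent of $N$ such that for all $0<|t|\le N^{-1}$ and all $x\in[-1,1]$, $$\Big|\sum_{1\le k\le N}e^{i(t\phi(k)+kx)}\Big|\le C|t|^{-1/2}.$$ *)

theory Defs
  imports Complex_Main
begin

definition phi :: "real \<Rightarrow> real" where
  "phi \<xi> = \<xi> * sqrt (\<xi>^2 + 1)"

end

theory Submission
  imports Defs "HOL-Analysis.Complex_Transcendental"
begin

lemma sin_lower: fixes y :: real assumes "0 \<le> y" "y \<le> 1" shows "y / 2 \<le> sin y"
proof -
  have "\<bar>sin y - (\<Sum>m<3. sin_coeff m * y ^ m)\<bar> \<le> inverse (fact 3) * \<bar>y\<bar> ^ 3"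
    by (rule Maclaurin_sin_bound)
  moreover have "(\<Sum>m<3. sin_coeff m * y ^ m) = y"
    by (simp add: eval_nat_numeral sin_coeff_def)
  moreover have "y ^ 3 \<le> y" proof -
    have "y*y \<le> 1" using assms by (simp add: mult_le_one)
    hence "y*(y*y) \<le> y" using assms by (intro mult_left_le) auto
    thus ?thesis by (simp add: power3_eq_cube mult.assoc)
  qed
  ultimately show ?thesis using assms by (simp add: eval_nat_numeral) (smt (verit))
qed

lemma cot_mono: assumes "0 < u" "u \<le> v" "v < pi"
  shows "cos v / sin v \<le> cos u / sin u"
proof -
  have su: "sin u > 0" using assms by (intro sin_gt_zero) auto
  have sv: "sin v > 0" using assms by (intro sin_gt_zero) auto
  have "sin (v - u) \<ge> 0" using assms by (intro sin_ge_zero) auto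
  hence "cos v * sin u \<le> cos u * sin v" by (simp add: sin_diff algebra_simps)
  thus ?thesis using su sv by (simp add: divide_simps mult.commute)
qed

lemma cis_inv_formula: assumes "sin u \<noteq> 0"
  shows "1 / (cis (2*u) - 1) = - 1/2 - \<i> * complex_of_real (cos u / sin u) / 2"
proof -
  have "(cis (2*u) - 1) * (- 1/2 - \<i> * complex_of_real (cos u / sin u) / 2) = 1"
  proof -
    have a: "sin (2*u) = 2 * sin u * cos u" by (rule sin_double)
    have b: "cos (2*u) = 1 - 2 * (sin u)^2" by (simp add: cos_double_sin)
    have c: "(sin u)^2 + (cos u)^2 = 1" by simp
    show ?thesis unfolding complex_eq_iff using assms
      apply (simp add: a b)
      using c by (simp add: power2_eq_square)
  qed
  from inverse_unique[OF this] show ?thesis by (simp add: inverse_eq_divide)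
qed

lemma sbp:
  fixes z a :: "nat \<Rightarrow> complex"
  assumes "m \<le> n"
  shows "(\<forall>k\<in>{m..n}. z k = a k * (z (Suc k) - z k)) \<longrightarrow>
    (\<Sum>k=m..n. z k) = a n * z (Suc n) - a m * z m - (\<Sum>k=m..<n. (a (Suc k) - a k) * z (Suc k))"
  using assms
proof (induction n rule: dec_induct)
  case base
  then show ?case by (simp add: algebra_simps)
next
  case (step n)
  show ?case
  proof
    assume H: "\<forall>k\<in>{m..Suc n}. z k = a k * (z (Suc k) - z k)"
    hence IH: "(\<Sum>k=m..n. z k) = a n * z (Suc n) - a m * z m - (\<Sum>k=m..<n. (a (Suc k) - a k) * z (Suc k))"
      using step by auto
    have e: "z (Suc n) = a (Suc n) * (z (Suc (Suc n)) - z (Suc n))" using H step by auto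
    have "(\<Sum>k=m..Suc n. z k) = (\<Sum>k=m..n. z k) + z (Suc n)" using step by simp
    also have "\<dots> = a (Suc n) * z (Suc (Suc n)) - a m * z m - (\<Sum>k=m..<Suc n. (a (Suc k) - a k) * z (Suc k))"
      using step by (subst IH, subst e) (simp add: algebra_simps)
    finally show "(\<Sum>k=m..Suc n. z k) = a (Suc n) * z (Suc (Suc n)) - a m * z m - (\<Sum>k=m..<Suc n. (a (Suc k) - a k) * z (Suc k))" .
  qed
qed

lemma KL:
  fixes z :: "nat \<Rightarrow> complex" and g :: "nat \<Rightarrow> real"
  assumes mn: "m \<le> n" and zs: "\<And>k. m \<le> k \<Longrightarrow> k \<le> n \<Longrightarrow> z (Suc k) = z k * cis (g k)"
    and gb: "\<And>k. m \<le> k \<Longrightarrow> k \<le> n \<Longrightarrow> \<delta> \<le> g k \<and> g k \<le> 2*pi - \<delta>"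
    and gm: "\<And>k. m \<le> k \<Longrightarrow> k < n \<Longrightarrow> g k \<le> g (Suc k)"
    and z1: "\<And>k. cmod (z k) = 1" and d0: "0 < \<delta>" and d1: "\<delta> \<le> 1"
  shows "cmod (\<Sum>k=m..n. z k) \<le> 9 / \<delta>"
proof -
  define c where "c k = cos (g k / 2) / sin (g k / 2)" for k
  define a where "a k = - 1/2 - \<i> * complex_of_real (c k) / 2" for k
  define K where "K = cos (\<delta>/2) / sin (\<delta>/2)"
  have pi1: "pi > 3" by (rule pi_gt3)
  have sinpos: "sin (g k / 2) > 0" if "m \<le> k" "k \<le> n" for k
    using gb[OF that] d0 by (intro sin_gt_zero) auto
  have ainv: "a k * (cis (g k) - 1) = 1" if "m \<le> k" "k \<le> n" for k
  proof -
    have "1 / (cis (2 * (g k / 2)) - 1) = a k"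
      unfolding a_def c_def using sinpos[OF that] by (intro cis_inv_formula) auto
    moreover have "cis (g k) \<noteq> 1"
    proof
      assume "cis (g k) = 1"
      hence "Re (cis (g k)) = 1" by simp
      hence "cos (2 * (g k / 2)) = 1" by simp
      moreover have "cos (2 * (g k / 2)) = 1 - 2 * (sin (g k / 2))^2" by (rule cos_double_sin)
      ultimately have "(sin (g k / 2))^2 = 0" by linarith
      thus False using sinpos[OF that] by simp
    qed
    ultimately show ?thesis by (auto simp: field_simps)
  qed
  have zid: "\<forall>k\<in>{m..n}. z k = a k * (z (Suc k) - z k)"
  proof
    fix k assume k: "k \<in> {m..n}"
    have "a k * (z (Suc k) - z k) = z k * (a k * (cis (g k) - 1))"
      using zs k by (simp add: algebra_simps)
    also have "\<dots> = z k" using ainv k by simp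
    finally show "z k = a k * (z (Suc k) - z k)" by simp
  qed
  have sd: "sin (\<delta>/2) > 0" using d0 d1 pi1 by (intro sin_gt_zero) auto
  have cb: "-K \<le> c k \<and> c k \<le> K" if "m \<le> k" "k \<le> n" for k
  proof
    show "c k \<le> K" unfolding c_def K_def using gb[OF that] d0 by (intro cot_mono) auto
    have "cos (pi - \<delta>/2) / sin (pi - \<delta>/2) \<le> c k"
      unfolding c_def using gb[OF that] d0 by (intro cot_mono) auto
    thus "-K \<le> c k" unfolding K_def by simp
  qed
  have cm: "c (Suc k) \<le> c k" if "m \<le> k" "k < n" for k
    unfolding c_def using gb[of k] gb[of "Suc k"] gm[OF that] that d0 by (intro cot_mono) auto
  have an: "cmod (a k) \<le> 1/2 + K/2" if "m \<le> k" "k \<le> n" for k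
  proof -
    have "cmod (a k) \<le> cmod (- 1/2) + cmod (\<i> * complex_of_real (c k) / 2)"
      unfolding a_def by (rule norm_triangle_ineq4)
    also have "\<dots> = 1/2 + \<bar>c k\<bar>/2" by (simp add: norm_mult norm_divide)
    finally show ?thesis using cb[OF that] by auto
  qed
  have ad: "cmod ((a (Suc k) - a k) * z (Suc k)) = (c k - c (Suc k)) / 2" if "m \<le> k" "k < n" for k
  proof -
    have "a (Suc k) - a k = - \<i> * complex_of_real (c (Suc k) - c k) / 2"
      unfolding a_def by (simp add: algebra_simps)
    hence "cmod ((a (Suc k) - a k) * z (Suc k)) = \<bar>c (Suc k) - c k\<bar> / 2"
      by (simp add: norm_mult norm_divide z1 flip: of_real_diff)
    thus ?thesis using cm[OF that] by simp
  qed
  have "cmod (\<Sum>k=m..n. z k) = cmod (a n * z (Suc n) - a m * z m - (\<Sum>k=m..<n. (a (Suc k) - a k) * z (Suc k)))"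
    using sbp[OF mn, of z a] zid by simp
  also have "\<dots> \<le> cmod (a n * z (Suc n)) + cmod (a m * z m) + cmod (\<Sum>k=m..<n. (a (Suc k) - a k) * z (Suc k))"
    by (smt (verit) norm_triangle_ineq4)
  also have "\<dots> \<le> cmod (a n) + cmod (a m) + (\<Sum>k=m..<n. cmod ((a (Suc k) - a k) * z (Suc k)))"
    using norm_sum[of "\<lambda>k. (a (Suc k) - a k) * z (Suc k)" "{m..<n}"] by (simp add: norm_mult z1)
  also have "(\<Sum>k=m..<n. cmod ((a (Suc k) - a k) * z (Suc k))) = (\<Sum>k=m..<n. (c k - c (Suc k)) / 2)"
    by (rule sum.cong) (auto simp: ad)
  also have "\<dots> = (c m - c n) / 2"
  proof -
    have "(\<Sum>k=m..<n. (c k - c (Suc k)) / 2) = - (\<Sum>k=m..<n. c (Suc k) - c k) / 2"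
      by (simp add: sum_divide_distrib[symmetric] sum_negf[symmetric])
    also have "\<dots> = (c m - c n) / 2" using sum_Suc_diff'[OF mn, of c] by simp
    finally show ?thesis .
  qed
  finally have X: "cmod (\<Sum>k=m..n. z k) \<le> cmod (a n) + cmod (a m) + (c m - c n) / 2" .
  have "cmod (\<Sum>k=m..n. z k) \<le> 1 + 2 * K"
  proof -
    have "c m - c n \<le> 2 * K" using cb[of m] cb[of n] mn by auto
    hence "(c m - c n) / 2 \<le> K" by simp
    moreover have "cmod (a n) + cmod (a m) \<le> 1 + K" using an[of n] an[of m] mn by simp
    ultimately show ?thesis using X by linarith
  qed
  also have "K \<le> 4 / \<delta>"
  proof -
    have "\<delta>/2/2 \<le> sin (\<delta>/2)" using d0 d1 by (intro sin_lower) auto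
    hence "K \<le> 1 / sin (\<delta>/2)" unfolding K_def using sd by (simp add: divide_right_mono)
    also have "\<dots> \<le> 4 / \<delta>" using sd d0 \<open>\<delta>/2/2 \<le> sin (\<delta>/2)\<close> by (simp add: field_simps)
    finally show ?thesis .
  qed
  hence "1 + 2 * K \<le> 1 + 8/\<delta>" by simp
  also have "\<dots> \<le> 9/\<delta>" using d0 d1 by (simp add: field_simps)
  finally show ?thesis by simp
qed

lemma poly1: fixes s :: real assumes "1 \<le> s" shows "(s + 1/3)^2 \<le> s * (s + 1)" "s * (s+1) \<le> (s + 1/2)^2"
  using assms by (simp_all add: power2_eq_square algebra_simps)

lemma phi_bounds: fixes \<xi> :: real assumes "1 \<le> \<xi>"
  shows "\<xi>^2 + 1/3 \<le> phi \<xi>" "phi \<xi> \<le> \<xi>^2 + 1/2"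
proof -
  have e: "phi \<xi> = sqrt (\<xi>^2 * (\<xi>^2 + 1))" using assms by (simp add: phi_def real_sqrt_mult)
  have s1: "1 \<le> \<xi>^2" using assms by (simp add: one_le_power)
  show "\<xi>^2 + 1/3 \<le> phi \<xi>" unfolding e by (rule real_le_rsqrt) (use poly1[OF s1] in simp)
  show "phi \<xi> \<le> \<xi>^2 + 1/2" unfolding e by (rule real_le_lsqrt) (use poly1[OF s1] in auto)
qed

lemma D_bounds: fixes k :: nat assumes "1 \<le> k"
  shows "0 \<le> phi (real (Suc k)) - phi (real k)"
    "phi (real (Suc k)) - phi (real k) \<le> 2 * real k + 7/6"
    "1 \<le> (phi (real (Suc (Suc k))) - phi (real (Suc k))) - (phi (real (Suc k)) - phi (real k))"
proof -
  have k1: "1 \<le> real k" using assms by simp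
  have r1: "real (Suc k) = real k + 1" "real (Suc (Suc k)) = real k + 2" by simp_all
  have p1: "(real k + 1)^2 = (real k)^2 + 2 * real k + 1" by (simp add: power2_eq_square algebra_simps)
  have p2: "(real k + 2)^2 = (real k)^2 + 4 * real k + 4" by (simp add: power2_eq_square algebra_simps)
  have a: "(real k)^2 + 1/3 \<le> phi (real k)" "phi (real k) \<le> (real k)^2 + 1/2"
    using phi_bounds[OF k1] by auto
  have b: "(real k + 1)^2 + 1/3 \<le> phi (real k + 1)" "phi (real k + 1) \<le> (real k + 1)^2 + 1/2"
    using phi_bounds[of "real k + 1"] k1 by auto
  have c: "(real k + 2)^2 + 1/3 \<le> phi (real k + 2)" "phi (real k + 2) \<le> (real k + 2)^2 + 1/2"
    using phi_bounds[of "real k + 2"] k1 by auto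
  show "0 \<le> phi (real (Suc k)) - phi (real k)" unfolding r1 using a b k1 p1 by linarith
  show "phi (real (Suc k)) - phi (real k) \<le> 2 * real k + 7/6" unfolding r1 using a b p1 by linarith
  show "1 \<le> (phi (real (Suc (Suc k))) - phi (real (Suc k))) - (phi (real (Suc k)) - phi (real k))"
    unfolding r1 using a b c p1 p2 by linarith
qed

lemma convex_interval:
  fixes S :: "nat set"
  assumes "finite S" "S \<noteq> {}" "\<And>i j l. i \<in> S \<Longrightarrow> l \<in> S \<Longrightarrow> i \<le> j \<Longrightarrow> j \<le> l \<Longrightarrow> j \<in> S"
  shows "S = {Min S..Max S}"
proof
  show "S \<subseteq> {Min S..Max S}" using assms(1) by auto
  show "{Min S..Max S} \<subseteq> S"
  proof
    fix j assume "j \<in> {Min S..Max S}"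
    thus "j \<in> S" using assms(3)[OF Min_in[OF assms(1,2)] Max_in[OF assms(1,2)], of j] by simp
  qed
qed

lemma main_pos:
  fixes N :: nat and t x :: real
  assumes N: "1 \<le> N" and t0: "0 < t" and tN: "t \<le> 1 / real N" and x1: "-1 \<le> x" and x2: "x \<le> 1"
  shows "cmod (\<Sum>k=1..N. cis (t * phi (real k) + real k * x)) \<le> 21 / sqrt t"
proof -
  define z where "z k = cis (t * phi (real k) + real k * x)" for k
  define g where "g k = t * (phi (real (Suc k)) - phi (real k)) + x" for k
  define \<delta> where "\<delta> = sqrt t"
  have tN': "t * real N \<le> 1" using tN N by (simp add: field_simps)
  have "t * 1 \<le> t * real N" using N t0 by (intro mult_left_mono) auto
  hence t1: "t \<le> 1" using tN' by simp
  have d0: "0 < \<delta>" unfolding \<delta>_def using t0 by simp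
  have d1: "\<delta> \<le> 1" unfolding \<delta>_def using t1 by simp
  have dsq: "\<delta> * \<delta> = t" unfolding \<delta>_def using t0 by simp
  have pi3: "pi > 3" by (rule pi_gt3)
  have zs: "z (Suc k) = z k * cis (g k)" for k
    unfolding z_def g_def cis_mult by (simp add: algebra_simps)
  have z1: "cmod (z k) = 1" for k unfolding z_def by simp
  have glo: "-1 \<le> g k" if "1 \<le> k" for k
  proof -
    have "0 \<le> t * (phi (real (Suc k)) - phi (real k))" using D_bounds(1)[OF that] t0 by simp
    thus ?thesis unfolding g_def using x1 by linarith
  qed
  have ghi: "g k \<le> 9/2" if "1 \<le> k" "k \<le> N" for k
  proof -
    have kN: "real k \<le> real N" using that by simp
    have D: "phi (real (Suc k)) - phi (real k) \<le> 2 * real N + 7/6"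
      using D_bounds(2)[OF that(1)] kN by linarith
    have e1: "t * (phi (real (Suc k)) - phi (real k)) \<le> t * (2 * real N + 7/6)"
      by (rule mult_left_mono[OF D]) (use t0 in simp)
    have e2: "t * (2 * real N + 7/6) = 2 * (t * real N) + 7/6 * t" by (simp add: algebra_simps)
    have "g k = t * (phi (real (Suc k)) - phi (real k)) + x" by (simp add: g_def)
    thus ?thesis using e1 e2 tN' t1 x2 by linarith
  qed
  have ginc: "g k + t \<le> g (Suc k)" if "1 \<le> k" for k
  proof -
    have "t * 1 \<le> t * ((phi (real (Suc (Suc k))) - phi (real (Suc k))) - (phi (real (Suc k)) - phi (real k)))"
      using D_bounds(3)[OF that] t0 by (intro mult_left_mono) auto
    thus ?thesis unfolding g_def by (simp add: algebra_simps)
  qed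
  have ginc2: "g k + t * real j \<le> g (k + j)" if "1 \<le> k" for k j
  proof (induction j)
    case 0 then show ?case by simp
  next
    case (Suc j)
    have "g (k + j) + t \<le> g (Suc (k + j))" using ginc[of "k + j"] that by simp
    moreover have "t * real (Suc j) = t * real j + t" by (simp add: algebra_simps)
    moreover have "k + Suc j = Suc (k + j)" by simp
    ultimately show ?case using Suc.IH by simp
  qed
  have gmono: "g k \<le> g l" if "1 \<le> k" "k \<le> l" for k l
  proof -
    have "g k + t * real (l - k) \<le> g (k + (l - k))" by (rule ginc2[OF that(1)])
    moreover have "0 \<le> t * real (l - k)" using t0 by simp
    moreover have "k + (l - k) = l" using that by simp
    ultimately show ?thesis by simp
  qed
  define I where "I = {1..N}"
  define A where "A = {k\<in>I. g k \<le> -\<delta>}"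
  define B where "B = {k\<in>I. -\<delta> < g k \<and> g k < \<delta>}"
  define C where "C = {k\<in>I. \<delta> \<le> g k}"
  have fin: "finite A" "finite B" "finite C" unfolding A_def B_def C_def I_def by auto
  have Ieq: "I = A \<union> B \<union> C" unfolding A_def B_def C_def by auto
  have "sum z I = sum z A + sum z B + sum z C"
  proof -
    have "sum z (A \<union> B \<union> C) = sum z (A \<union> B) + sum z C"
      using fin d0 by (intro sum.union_disjoint) (auto simp: A_def B_def C_def)
    also have "sum z (A \<union> B) = sum z A + sum z B"
      using fin d0 by (intro sum.union_disjoint) (auto simp: A_def B_def C_def)
    finally show ?thesis using Ieq by simp
  qed
  hence split: "cmod (sum z I) \<le> cmod (sum z A) + cmod (sum z B) + cmod (sum z C)"
    using norm_triangle_ineq[of "sum z A + sum z B" "sum z C"] norm_triangle_ineq[of "sum z A" "sum z B"]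
    by simp
  have bA: "cmod (sum z A) \<le> 9 / \<delta>"
  proof (cases "A = {}")
    case True then show ?thesis using d0 by simp
  next
    case False
    have Aeq: "A = {Min A..Max A}"
    proof (rule convex_interval[OF fin(1) False])
      fix i j l assume "i \<in> A" "l \<in> A" "i \<le> j" "j \<le> l"
      thus "j \<in> A" unfolding A_def I_def using gmono[of j l] by auto
    qed
    have mn: "Min A \<le> Max A" using fin(1) False by simp
    have inA: "k \<in> A" if "Min A \<le> k" "k \<le> Max A" for k using that Aeq by (metis atLeastAtMost_iff)
    have "cmod (\<Sum>k=Min A..Max A. z k) \<le> 9 / \<delta>"
    proof (rule KL[OF mn, where g = "\<lambda>k. g k + 2 * pi"])
      fix k assume k: "Min A \<le> k" "k \<le> Max A"
      have "cis (g k + 2 * pi) = cis (g k)" by (simp flip: cis_mult)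
      thus "z (Suc k) = z k * cis (g k + 2 * pi)" using zs by simp
      have "k \<in> A" by (rule inA[OF k])
      hence "1 \<le> k" "g k \<le> -\<delta>" unfolding A_def I_def by auto
      thus "\<delta> \<le> g k + 2 * pi \<and> g k + 2 * pi \<le> 2 * pi - \<delta>" using glo[of k] pi3 d1 by auto
    next
      fix k assume k: "Min A \<le> k" "k < Max A"
      have "k \<in> A" by (rule inA) (use k in auto)
      hence "1 \<le> k" unfolding A_def I_def by auto
      thus "g k + 2 * pi \<le> g (Suc k) + 2 * pi" using gmono[of k "Suc k"] by simp
    qed (use z1 d0 d1 in auto)
    moreover have eqs: "sum z A = (\<Sum>k=Min A..Max A. z k)" by (rule arg_cong[OF Aeq])
    ultimately show ?thesis by (simp only: eqs)
  qed
  have bC: "cmod (sum z C) \<le> 9 / \<delta>"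
  proof (cases "C = {}")
    case True then show ?thesis using d0 by simp
  next
    case False
    have Ceq: "C = {Min C..Max C}"
    proof (rule convex_interval[OF fin(3) False])
      fix i j l assume "i \<in> C" "l \<in> C" "i \<le> j" "j \<le> l"
      thus "j \<in> C" unfolding C_def I_def using gmono[of i j] by auto
    qed
    have mn: "Min C \<le> Max C" using fin(3) False by simp
    have inC: "k \<in> C" if "Min C \<le> k" "k \<le> Max C" for k using that Ceq by (metis atLeastAtMost_iff)
    have "cmod (\<Sum>k=Min C..Max C. z k) \<le> 9 / \<delta>"
    proof (rule KL[OF mn, where g = g])
      fix k assume k: "Min C \<le> k" "k \<le> Max C"
      show "z (Suc k) = z k * cis (g k)" by (rule zs)
      have "k \<in> C" by (rule inC[OF k])
      hence "1 \<le> k" "k \<le> N" "\<delta> \<le> g k" unfolding C_def I_def by auto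
      thus "\<delta> \<le> g k \<and> g k \<le> 2 * pi - \<delta>" using ghi[of k] pi3 d1 by auto
    next
      fix k assume k: "Min C \<le> k" "k < Max C"
      have "k \<in> C" by (rule inC) (use k in auto)
      hence "1 \<le> k" unfolding C_def I_def by auto
      thus "g k \<le> g (Suc k)" using gmono[of k "Suc k"] by simp
    qed (use z1 d0 d1 in auto)
    moreover have eqs: "sum z C = (\<Sum>k=Min C..Max C. z k)" by (rule arg_cong[OF Ceq])
    ultimately show ?thesis by (simp only: eqs)
  qed
  have bB: "cmod (sum z B) \<le> 3 / \<delta>"
  proof -
    have "cmod (sum z B) \<le> (\<Sum>k\<in>B. cmod (z k))" by (rule norm_sum)
    also have "\<dots> = real (card B)" using z1 by simp
    also have "real (card B) \<le> 2 / \<delta> + 1"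
    proof (cases "B = {}")
      case True then show ?thesis using d0 by simp
    next
      case False
      define lo where "lo = Min B"
      define hi where "hi = Max B"
      have lo: "lo \<in> B" and hi: "hi \<in> B" unfolding lo_def hi_def using fin(2) False by auto
      have sub: "B \<subseteq> {lo..hi}" unfolding lo_def hi_def using fin(2) by auto
      have lohi: "lo \<le> hi" unfolding lo_def hi_def using fin(2) False by simp
      have "card B \<le> card {lo..hi}" by (rule card_mono[OF _ sub]) simp
      hence cB: "real (card B) \<le> real (hi - lo) + 1" using lohi by simp
      have lo1: "1 \<le> lo" using lo unfolding B_def I_def by auto
      have "g lo + t * real (hi - lo) \<le> g (lo + (hi - lo))" by (rule ginc2[OF lo1])
      hence "g lo + t * real (hi - lo) \<le> g hi" using lohi by simp
      moreover have "-\<delta> < g lo" "g hi < \<delta>" using lo hi unfolding B_def by auto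
      ultimately have "t * real (hi - lo) \<le> 2 * \<delta>" by linarith
      hence "\<delta> * \<delta> * real (hi - lo) \<le> \<delta> * 2" using dsq by (simp add: mult.commute)
      hence "\<delta> * real (hi - lo) \<le> 2" using d0 by (simp add: mult.assoc)
      hence "real (hi - lo) \<le> 2 / \<delta>" using d0 by (simp add: field_simps)
      thus ?thesis using cB by linarith
    qed
    also have "\<dots> \<le> 3 / \<delta>" using d0 d1 by (simp add: field_simps)
    finally show ?thesis .
  qed
  have "cmod (sum z I) \<le> 21 / \<delta>" using split bA bB bC by simp
  thus ?thesis unfolding z_def I_def \<delta>_def .
qed

theorem lemma2p9:
  shows "\<exists>C>0. \<forall>(N::nat) (t::real) (x::real). N \<ge> 1 \<longrightarrow> 0 < \<bar>t\<bar> \<longrightarrow> \<bar>t\<bar> \<le> 1 / real N \<longrightarrow>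
     x \<in> {-1..1} \<longrightarrow>
     cmod (\<Sum>k=1..N. cis (t * phi (real k) + real k * x)) \<le> C * \<bar>t\<bar> powr (-1/2)"
proof (intro exI[of _ 21] conjI allI impI)
  show "(0::real) < 21" by simp
  fix N :: nat and t x :: real
  assume N: "N \<ge> 1" and t0: "0 < \<bar>t\<bar>" and tN: "\<bar>t\<bar> \<le> 1 / real N" and x: "x \<in> {-1..1}"
  have "\<bar>t\<bar> powr (-1/2) = \<bar>t\<bar> powr (-(1/2))" by simp
  also have "\<dots> = inverse (\<bar>t\<bar> powr (1/2))" by (rule powr_minus)
  also have "\<dots> = inverse (sqrt \<bar>t\<bar>)" by (simp add: powr_half_sqrt)
  finally have pw0: "\<bar>t\<bar> powr (-1/2) = inverse (sqrt \<bar>t\<bar>)" .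
  have pw: "21 * \<bar>t\<bar> powr (-1/2) = 21 / sqrt \<bar>t\<bar>" unfolding pw0 by (simp add: inverse_eq_divide)
  show "cmod (\<Sum>k=1..N. cis (t * phi (real k) + real k * x)) \<le> 21 * \<bar>t\<bar> powr (-1/2)"
  proof (cases "t > 0")
    case True
    have ta: "\<bar>t\<bar> = t" using True by simp
    have "t \<le> 1 / real N" using tN ta by simp
    hence "cmod (\<Sum>k=1..N. cis (t * phi (real k) + real k * x)) \<le> 21 / sqrt t"
      using x True N by (intro main_pos) auto
    thus ?thesis by (subst pw) (simp only: ta)
  next
    case False
    hence tn: "0 < - t" "\<bar>t\<bar> = - t" using t0 by auto
    have e: "cis (t * phi (real k) + real k * x) = cnj (cis ((-t) * phi (real k) + real k * (-x)))" for k
      unfolding cis_cnj by (simp add: algebra_simps)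
    have "(\<Sum>k=1..N. cis (t * phi (real k) + real k * x)) =
        cnj (\<Sum>k=1..N. cis ((-t) * phi (real k) + real k * (-x)))"
      unfolding e cnj_sum ..
    hence "cmod (\<Sum>k=1..N. cis (t * phi (real k) + real k * x)) =
        cmod (\<Sum>k=1..N. cis ((-t) * phi (real k) + real k * (-x)))" by (simp only: complex_mod_cnj)
    also have "\<dots> \<le> 21 / sqrt (-t)"
    proof (rule main_pos)
      show "- t \<le> 1 / real N" using tN tn by simp
    qed (use N x tn in auto)
    finally show ?thesis by (subst pw) (simp only: tn)
  qed
qed

end
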